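(* Let $x_{\gamma,\alpha}$ ($0\le\gamma<N$, $0\le\alpha\le K_\gamma$) and $y_0,\dots,y_{N-1}$ be variables, and let $f_0,\dots,f_{N-1}$ with $f_\gamma:\mathbb{R}^{K_\gamma+1}\to\mathbb{R}$ be either all monotone (non-decreasing in the pointwise order) or all antitone (non-increasing). If a state $(\sigma,\mu)$ satisfies $\circledast_{\gamma=0}^{N}\big(\bigwedge_{\alpha=0}^{K_\gamma+1}[x_{\gamma,\alpha}]\big)$ and, for every $\gamma$, $(\sigma,\mu)\models y_\gamma\sim f_\gamma(x_{\gamma,0},\dots,x_{\gamma,K_\gamma})$, then $(\sigma,\mu)\models\circledast_{\gamma=0}^{N}[y_\gamma]$.
   Context: Variables are split into disjoint sets $\mathcal{DV}$ (deterministic) and $\mathcal{RV}$ (randomized); values are real numbers. For finite $S$, $\mathrm{Mem}[S]$ is the set of maps $S\to\mathbb{R}$ ordered pointwise; $p_A$ is restriction; $\mathcal{D}(\cdot)$ denotes countably supported probability distributions; $\mathrm{dom}(\mu)=S$ for $\mu\in\mathcal{D}(\mathrm{Mem}[S])$; $\pi_A\mu$ is the marginal on $A$; $\mu\sqsubseteq\mu'$ iff $\mathrm{dom}(\mu)\subseteq\mathrm{dom}(\mu')$ and $\pi_{\mathrm{dom}(\mu)}\mu'=\mu$. A partition is a set of pairwise disjoint nonempty sets; $\mathcal{T}$ coarsens $\mathcal{S}$ if $\bigcup\mathcal{T}=\bigcup\mathcal{S}$ and each element of $\mathcal{T}$ is a union of a subfamily of $\mathcal{S}$. $\mu$ is $\mathcal{S}$-PNA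 if for every $\mathcal{T}$ coarsening $\mathcal{S}$ and every family $(f_A:\mathrm{Mem}[A]\to[0,\infty))_{A\in\mathcal{T}}$ all non-decreasing or all non-increasing, $\mathbb{E}_{m\sim\mu}[\prod_Af_A(p_Am)]\le\prod_A\mathbb{E}_{m\sim\mu}[f_A(p_Am)]$. $\mu_1\oplus\mu_2$ (domains $S,T$) is empty if $S\cap T\ne\emptyset$, and otherwise the set of $\mu\in\mathcal{D}(\mathrm{Mem}[S\cup T])$ with $\pi_S\mu=\mu_1$, $\pi_T\mu=\mu_2$ that are $(\mathcal{S}\cup\mathcal{T})$-PNA whenever $\mathcal{S}$ partitions a subset of $S$, $\mathcal{T}$ partitions a subset of $T$, $\mu_1$ is $\mathcal{S}$-PNA and $\mu_2$ is $\mathcal{T}$-PNA. States are pairs $(\sigma,\mu)$ of a deterministic memory and a distribution. Satisfaction: $(\sigma,\mu)\models[y]$ iff $y\in\mathrm{dom}(\sigma)\cup\mathrm{dom}(\mu)$; $(\sigma,\mu)\models e\sim e'$ iff all free variables of $e,e'$ lie in $\mathrm{dom}(\sigma)\cup\mathrm{dom}(\mu)$ and $e,e'$ evaluate to the same value on $(\sigma,m)$ for every $m$ in the support of $\mu$; conjunction is pointwise; $(\sigma,\mu)\models P\circledast Q$ iff there exist $\mu',\mu_1,\mu_2$ with $\mu'\sqsubseteq\mu$, $\mu'\in\mu_1\oplus\mu_2$, $(\sigma,\mu_1)\models P$, $(\sigma,\mu_2)\models Q$. Iterated: $\circledast_{i=0}^{1}P_i=P_0$, $\circledast_{i=0}^{N}P_i=(\circledast_{i=0}^{N-1}P_i)\circledast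 P_{N-1}$; similarly $\bigwedge_{\alpha=0}^{K}Q_\alpha=Q_0\wedge\dots\wedge Q_{K-1}$. *)

theory Defs
  imports "HOL-Probability.Probability"
begin

text \<open>Memories are partial maps from variables to reals; a memory in Mem[S] has domain S.
  A distribution is a pair of its domain S and a (countably supported) pmf on memories.\<close>

type_synonym 'v mem = "'v \<Rightarrow> real option"
type_synonym 'v dist = "'v set \<times> 'v mem pmf"

definition dmn :: "'v dist \<Rightarrow> 'v set" where
  "dmn \<mu> = fst \<mu>"

definition wf_dist :: "'v dist \<Rightarrow> bool" where
  "wf_dist \<mu> \<longleftrightarrow> finite (fst \<mu>) \<and> (\<forall>m\<in>set_pmf (snd \<mu>). dom m = fst \<mu>)"

definition mems :: "'v set \<Rightarrow> 'v mem set" where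
  "mems A = {m. dom m = A}"

definition mem_le :: "'v set \<Rightarrow> 'v mem \<Rightarrow> 'v mem \<Rightarrow> bool" where
  "mem_le A m m' \<longleftrightarrow> (\<forall>v\<in>A. the (m v) \<le> the (m' v))"

definition mono_mem :: "'v set \<Rightarrow> ('v mem \<Rightarrow> real) \<Rightarrow> bool" where
  "mono_mem A g \<longleftrightarrow> (\<forall>m\<in>mems A. \<forall>m'\<in>mems A. mem_le A m m' \<longrightarrow> g m \<le> g m')"

definition anti_mem :: "'v set \<Rightarrow> ('v mem \<Rightarrow> real) \<Rightarrow> bool" where
  "anti_mem A g \<longleftrightarrow> (\<forall>m\<in>mems A. \<forall>m'\<in>mems A. mem_le A m m' \<longrightarrow> g m' \<le> g m)"

definition marg :: "'v set \<Rightarrow> 'v dist \<Rightarrow> 'v dist" where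
  "marg A \<mu> = (A, map_pmf (\<lambda>m. m |` A) (snd \<mu>))"

definition dist_le :: "'v dist \<Rightarrow> 'v dist \<Rightarrow> bool" where
  "dist_le \<mu> \<mu>' \<longleftrightarrow> dmn \<mu> \<subseteq> dmn \<mu>' \<and> marg (dmn \<mu>) \<mu>' = \<mu>"

definition is_partition :: "'v set set \<Rightarrow> bool" where
  "is_partition P \<longleftrightarrow> (\<forall>A\<in>P. A \<noteq> {}) \<and> (\<forall>A\<in>P. \<forall>B\<in>P. A \<noteq> B \<longrightarrow> A \<inter> B = {})"

definition coarsens :: "'v set set \<Rightarrow> 'v set set \<Rightarrow> bool" where
  "coarsens T S \<longleftrightarrow> is_partition T \<and> \<Union>T = \<Union>S \<and> (\<forall>B\<in>T. \<exists>F\<subseteq>S. B = \<Union>F)"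

text \<open>Partition-indexed negative association; expectations of nonnegative functions
  are taken in [0,\<infinity>] (nonnegative Lebesgue integral).\<close>
definition PNA :: "'v dist \<Rightarrow> 'v set set \<Rightarrow> bool" where
  "PNA \<mu> S \<longleftrightarrow>
    (\<forall>T (fs :: 'v set \<Rightarrow> 'v mem \<Rightarrow> real).
       coarsens T S \<and> (\<forall>A\<in>T. \<forall>m\<in>mems A. 0 \<le> fs A m) \<and>
       ((\<forall>A\<in>T. mono_mem A (fs A)) \<or> (\<forall>A\<in>T. anti_mem A (fs A))) \<longrightarrow>
       (\<integral>\<^sup>+ m. ennreal (\<Prod>A\<in>T. fs A (m |` A)) \<partial>measure_pmf (snd \<mu>))
         \<le> (\<Prod>A\<in>T. \<integral>\<^sup>+ m. ennreal (fs A (m |` A)) \<partial>measure_pmf (snd \<mu>)))"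

definition oplus :: "'v dist \<Rightarrow> 'v dist \<Rightarrow> 'v dist set" where
  "oplus \<mu>1 \<mu>2 =
    (if dmn \<mu>1 \<inter> dmn \<mu>2 \<noteq> {} then {}
     else {\<mu>. wf_dist \<mu> \<and> dmn \<mu> = dmn \<mu>1 \<union> dmn \<mu>2 \<and>
              marg (dmn \<mu>1) \<mu> = \<mu>1 \<and> marg (dmn \<mu>2) \<mu> = \<mu>2 \<and>
              (\<forall>S T. is_partition S \<and> \<Union>S \<subseteq> dmn \<mu>1 \<and> is_partition T \<and> \<Union>T \<subseteq> dmn \<mu>2 \<and>
                     PNA \<mu>1 S \<and> PNA \<mu>2 T \<longrightarrow> PNA \<mu> (S \<union> T))})"

datatype 'v expr = Var 'v | Fun "real list \<Rightarrow> real" "'v expr list"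

fun fv :: "'v expr \<Rightarrow> 'v set" where
  "fv (Var x) = {x}"
| "fv (Fun g es) = \<Union>(set (map fv es))"

fun eval :: "'v mem \<Rightarrow> 'v mem \<Rightarrow> 'v expr \<Rightarrow> real" where
  "eval \<sigma> m (Var x) = (case \<sigma> x of Some v \<Rightarrow> v | None \<Rightarrow> the (m x))"
| "eval \<sigma> m (Fun g es) = g (map (eval \<sigma> m) es)"

datatype 'v assn = Bnd 'v | Sim "'v expr" "'v expr" | Conj "'v assn" "'v assn" | Sep "'v assn" "'v assn"

fun sat :: "'v mem \<Rightarrow> 'v dist \<Rightarrow> 'v assn \<Rightarrow> bool" where
  "sat \<sigma> \<mu> (Bnd y) \<longleftrightarrow> y \<in> dom \<sigma> \<union> dmn \<mu>"
| "sat \<sigma> \<mu> (Sim e e') \<longleftrightarrow> fv e \<union> fv e' \<subseteq> dom \<sigma> \<union> dmn \<mu> \<and>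
      (\<forall>m\<in>set_pmf (snd \<mu>). eval \<sigma> m e = eval \<sigma> m e')"
| "sat \<sigma> \<mu> (Conj P Q) \<longleftrightarrow> sat \<sigma> \<mu> P \<and> sat \<sigma> \<mu> Q"
| "sat \<sigma> \<mu> (Sep P Q) \<longleftrightarrow> (\<exists>\<mu>' \<mu>1 \<mu>2. wf_dist \<mu>' \<and> wf_dist \<mu>1 \<and> wf_dist \<mu>2 \<and>
      dist_le \<mu>' \<mu> \<and> \<mu>' \<in> oplus \<mu>1 \<mu>2 \<and> sat \<sigma> \<mu>1 P \<and> sat \<sigma> \<mu>2 Q)"

text \<open>Iterated operators with the paper's convention: index N ranges over 0..N-1.
  (Only defined for N \<ge> 1 in the paper.)\<close>
fun bigsep :: "nat \<Rightarrow> (nat \<Rightarrow> 'v assn) \<Rightarrow> 'v assn" where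
  "bigsep 0 P = undefined"
| "bigsep (Suc 0) P = P 0"
| "bigsep (Suc (Suc n)) P = Sep (bigsep (Suc n) P) (P (Suc n))"

fun bigconj :: "nat \<Rightarrow> (nat \<Rightarrow> 'v assn) \<Rightarrow> 'v assn" where
  "bigconj 0 P = undefined"
| "bigconj (Suc 0) P = P 0"
| "bigconj (Suc (Suc n)) P = Conj (bigconj (Suc n) P) (P (Suc n))"

definition is_state :: "'v set \<Rightarrow> 'v set \<Rightarrow> 'v mem \<Rightarrow> 'v dist \<Rightarrow> bool" where
  "is_state DV RV \<sigma> \<mu> \<longleftrightarrow> finite (dom \<sigma>) \<and> dom \<sigma> \<subseteq> DV \<and> wf_dist \<mu> \<and> dmn \<mu> \<subseteq> RV"

definition mono_vec :: "nat \<Rightarrow> (real list \<Rightarrow> real) \<Rightarrow> bool" where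
  "mono_vec n g \<longleftrightarrow> (\<forall>u v. length u = n \<and> length v = n \<and> list_all2 (\<le>) u v \<longrightarrow> g u \<le> g v)"

definition anti_vec :: "nat \<Rightarrow> (real list \<Rightarrow> real) \<Rightarrow> bool" where
  "anti_vec n g \<longleftrightarrow> (\<forall>u v. length u = n \<and> length v = n \<and> list_all2 (\<le>) u v \<longrightarrow> g v \<le> g u)"

end

theory Submission imports Defs begin

definition DU :: "(nat \<Rightarrow> 'v set) \<Rightarrow> nat set \<Rightarrow> 'v set" where
  "DU D j = (\<Union>\<gamma>\<in>j. D \<gamma>)"

definition INA :: "'v mem pmf \<Rightarrow> (nat \<Rightarrow> 'v set) \<Rightarrow> nat set \<Rightarrow> bool" where
  "INA p D I \<longleftrightarrow> (\<forall>J (F :: nat set \<Rightarrow> 'v mem \<Rightarrow> real).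
     (\<forall>j\<in>J. j \<subseteq> I) \<and> (\<forall>j\<in>J. \<forall>j'\<in>J. j \<noteq> j' \<longrightarrow> j \<inter> j' = {}) \<and>
     (\<forall>j\<in>J. \<forall>m\<in>mems (DU D j). 0 \<le> F j m) \<and>
     ((\<forall>j\<in>J. mono_mem (DU D j) (F j)) \<or> (\<forall>j\<in>J. anti_mem (DU D j) (F j))) \<longrightarrow>
     (\<integral>\<^sup>+ m. ennreal (\<Prod>j\<in>J. F j (m |` DU D j)) \<partial>measure_pmf p)
       \<le> (\<Prod>j\<in>J. \<integral>\<^sup>+ m. ennreal (F j (m |` DU D j)) \<partial>measure_pmf p))"

lemma marg_integral:
  assumes "\<And>m. h (m |` B) = h m"
  shows "(\<integral>\<^sup>+ m. h m \<partial>measure_pmf (snd (marg B \<mu>))) = (\<integral>\<^sup>+ m. h m \<partial>measure_pmf (snd \<mu>))"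
  using assms by (simp add: marg_def)

lemma INA_transfer:
  fixes D :: "nat \<Rightarrow> 'v set" and \<mu> \<nu> :: "'v dist"
  assumes "dist_le \<nu> \<mu>" "DU D I \<subseteq> dmn \<nu>" "INA (snd \<nu>) D I"
  shows "INA (snd \<mu>) D I"
  unfolding INA_def
proof (intro allI impI)
  fix J :: "nat set set" and F :: "nat set \<Rightarrow> 'v mem \<Rightarrow> real"
  assume H: "(\<forall>j\<in>J. j \<subseteq> I) \<and> (\<forall>j\<in>J. \<forall>j'\<in>J. j \<noteq> j' \<longrightarrow> j \<inter> j' = {}) \<and>
     (\<forall>j\<in>J. \<forall>m\<in>mems (DU D j). 0 \<le> F j m) \<and>
     ((\<forall>j\<in>J. mono_mem (DU D j) (F j)) \<or> (\<forall>j\<in>J. anti_mem (DU D j) (F j)))"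
  have H1: "\<forall>j\<in>J. j \<subseteq> I" using H by (elim conjE)
  have nu: "\<nu> = marg (dmn \<nu>) \<mu>" using assms(1) unfolding dist_le_def by simp
  have sub: "\<And>j. j \<in> J \<Longrightarrow> DU D j \<subseteq> dmn \<nu>" using H1 assms(2) unfolding DU_def by blast
  have "(\<integral>\<^sup>+ m. ennreal (\<Prod>j\<in>J. F j (m |` DU D j)) \<partial>measure_pmf (snd \<nu>))
       \<le> (\<Prod>j\<in>J. \<integral>\<^sup>+ m. ennreal (F j (m |` DU D j)) \<partial>measure_pmf (snd \<nu>))"
    using assms(3) H unfolding INA_def by (elim allE[where x=J] allE[where x=F]) (erule mp)
  moreover have "(\<integral>\<^sup>+ m. ennreal (\<Prod>j\<in>J. F j (m |` DU D j)) \<partial>measure_pmf (snd \<nu>))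
     = (\<integral>\<^sup>+ m. ennreal (\<Prod>j\<in>J. F j (m |` DU D j)) \<partial>measure_pmf (snd \<mu>))"
    apply (subst nu) apply (rule marg_integral)
    using sub by (auto intro!: arg_cong[where f=ennreal] prod.cong simp: Int_absorb1)
  moreover have "(\<Prod>j\<in>J. \<integral>\<^sup>+ m. ennreal (F j (m |` DU D j)) \<partial>measure_pmf (snd \<nu>))
     = (\<Prod>j\<in>J. \<integral>\<^sup>+ m. ennreal (F j (m |` DU D j)) \<partial>measure_pmf (snd \<mu>))"
    apply (rule prod.cong, simp)
    apply (subst nu) apply (rule marg_integral)
    using sub by (auto simp: Int_absorb1)
  ultimately show "(\<integral>\<^sup>+ m. ennreal (\<Prod>j\<in>J. F j (m |` DU D j)) \<partial>measure_pmf (snd \<mu>))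
       \<le> (\<Prod>j\<in>J. \<integral>\<^sup>+ m. ennreal (F j (m |` DU D j)) \<partial>measure_pmf (snd \<mu>))" by simp
qed

lemma PNA_trivial:
  fixes \<nu> :: "'v dist"
  assumes "P = {} \<or> (\<exists>A. P = {A})"
  shows "PNA \<nu> P"
  unfolding PNA_def
proof (intro allI impI)
  fix T :: "'v set set" and fs :: "'v set \<Rightarrow> 'v mem \<Rightarrow> real"
  assume H: "coarsens T P \<and> (\<forall>A\<in>T. \<forall>m\<in>mems A. 0 \<le> fs A m) \<and>
       ((\<forall>A\<in>T. mono_mem A (fs A)) \<or> (\<forall>A\<in>T. anti_mem A (fs A)))"
  have C: "coarsens T P" using H by (elim conjE)
  have C1: "\<forall>B\<in>T. B \<noteq> {}" using C by (simp add: coarsens_def is_partition_def)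
  have C2: "\<Union>T = \<Union>P" using C by (simp add: coarsens_def)
  have C3: "\<forall>B\<in>T. \<exists>F\<subseteq>P. B = \<Union>F" using C by (simp add: coarsens_def)
  have "T = {} \<or> (\<exists>A. T = {A})"
  proof (cases "P = {}")
    case True
    then have "\<Union>T = {}" using C2 by simp
    then have "T = {}" using C1 by blast
    then show ?thesis by simp
  next
    case False
    then obtain A where A: "P = {A}" using assms by auto
    have "T \<subseteq> {A}"
    proof
      fix B assume B: "B \<in> T"
      then obtain F where F: "F \<subseteq> {A}" "B = \<Union>F" using C3 A by blast
      have "B \<noteq> {}" using C1 B by blast
      then have "B = A" using F by (auto simp: subset_singleton_iff)
      then show "B \<in> {A}" by simp
    qed
    then show ?thesis by (meson subset_singletonD)
  qed
  then show "(\<integral>\<^sup>+ m. ennreal (\<Prod>A\<in>T. fs A (m |` A)) \<partial>measure_pmf (snd \<nu>))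
         \<le> (\<Prod>A\<in>T. \<integral>\<^sup>+ m. ennreal (fs A (m |` A)) \<partial>measure_pmf (snd \<nu>))"
  proof
    assume "T = {}"
    then show ?thesis by (simp add: measure_pmf.emeasure_space_1)
  next
    assume "\<exists>A. T = {A}"
    then show ?thesis by auto
  qed
qed

lemma INA_D:
  assumes "INA p D I" "\<forall>j\<in>J. j \<subseteq> I" "\<forall>j\<in>J. \<forall>j'\<in>J. j \<noteq> j' \<longrightarrow> j \<inter> j' = {}"
    "\<forall>j\<in>J. \<forall>m\<in>mems (DU D j). 0 \<le> F j m"
    "(\<forall>j\<in>J. mono_mem (DU D j) (F j)) \<or> (\<forall>j\<in>J. anti_mem (DU D j) (F j))"
  shows "(\<integral>\<^sup>+ m. ennreal (\<Prod>j\<in>J. F j (m |` DU D j)) \<partial>measure_pmf p)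
       \<le> (\<Prod>j\<in>J. \<integral>\<^sup>+ m. ennreal (F j (m |` DU D j)) \<partial>measure_pmf p)"
proof -
  have "(\<forall>j\<in>J. j \<subseteq> I) \<and> (\<forall>j\<in>J. \<forall>j'\<in>J. j \<noteq> j' \<longrightarrow> j \<inter> j' = {}) \<and>
     (\<forall>j\<in>J. \<forall>m\<in>mems (DU D j). 0 \<le> F j m) \<and>
     ((\<forall>j\<in>J. mono_mem (DU D j) (F j)) \<or> (\<forall>j\<in>J. anti_mem (DU D j) (F j))) \<longrightarrow>
     (\<integral>\<^sup>+ m. ennreal (\<Prod>j\<in>J. F j (m |` DU D j)) \<partial>measure_pmf p)
       \<le> (\<Prod>j\<in>J. \<integral>\<^sup>+ m. ennreal (F j (m |` DU D j)) \<partial>measure_pmf p)"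
    using assms(1) unfolding INA_def by (elim allE[where x=J] allE[where x=F])
  then show ?thesis by (rule mp) (intro conjI assms(2-5))
qed

lemma PNA_D:
  assumes "PNA \<nu> S" "coarsens T S" "\<forall>A\<in>T. \<forall>m\<in>mems A. 0 \<le> fs A m"
    "(\<forall>A\<in>T. mono_mem A (fs A)) \<or> (\<forall>A\<in>T. anti_mem A (fs A))"
  shows "(\<integral>\<^sup>+ m. ennreal (\<Prod>A\<in>T. fs A (m |` A)) \<partial>measure_pmf (snd \<nu>))
         \<le> (\<Prod>A\<in>T. \<integral>\<^sup>+ m. ennreal (fs A (m |` A)) \<partial>measure_pmf (snd \<nu>))"
proof -
  have "coarsens T S \<and> (\<forall>A\<in>T. \<forall>m\<in>mems A. 0 \<le> fs A m) \<and>
       ((\<forall>A\<in>T. mono_mem A (fs A)) \<or> (\<forall>A\<in>T. anti_mem A (fs A))) \<longrightarrow>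
       (\<integral>\<^sup>+ m. ennreal (\<Prod>A\<in>T. fs A (m |` A)) \<partial>measure_pmf (snd \<nu>))
         \<le> (\<Prod>A\<in>T. \<integral>\<^sup>+ m. ennreal (fs A (m |` A)) \<partial>measure_pmf (snd \<nu>))"
    using assms(1) unfolding PNA_def by (elim allE[where x=T] allE[where x=fs])
  then show ?thesis by (rule mp) (intro conjI assms(2-4))
qed

lemma INA_to_PNA:
  fixes D :: "nat \<Rightarrow> 'v set" and \<nu> :: "'v dist"
  assumes INA: "INA (snd \<nu>) D I"
    and disj: "\<forall>\<gamma>\<in>I. \<forall>\<gamma>'\<in>I. \<gamma> \<noteq> \<gamma>' \<longrightarrow> D \<gamma> \<inter> D \<gamma>' = {}"
  shows "PNA \<nu> {D \<gamma> | \<gamma>. \<gamma> \<in> I \<and> D \<gamma> \<noteq> {}}"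
  unfolding PNA_def
proof (intro allI impI)
  define S where "S = {D \<gamma> | \<gamma>. \<gamma> \<in> I \<and> D \<gamma> \<noteq> {}}"
  fix T :: "'v set set" and fs :: "'v set \<Rightarrow> 'v mem \<Rightarrow> real"
  assume H: "coarsens T {D \<gamma> | \<gamma>. \<gamma> \<in> I \<and> D \<gamma> \<noteq> {}} \<and> (\<forall>A\<in>T. \<forall>m\<in>mems A. 0 \<le> fs A m) \<and>
       ((\<forall>A\<in>T. mono_mem A (fs A)) \<or> (\<forall>A\<in>T. anti_mem A (fs A)))"
  have C: "coarsens T S" using H unfolding S_def by (elim conjE)
  have Hn: "\<forall>A\<in>T. \<forall>m\<in>mems A. 0 \<le> fs A m" using H by (elim conjE)
  have Hm: "(\<forall>A\<in>T. mono_mem A (fs A)) \<or> (\<forall>A\<in>T. anti_mem A (fs A))" using H by (elim conjE)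
  have C1: "\<forall>B\<in>T. B \<noteq> {}" using C by (simp add: coarsens_def is_partition_def)
  have C1': "\<forall>B\<in>T. \<forall>B'\<in>T. B \<noteq> B' \<longrightarrow> B \<inter> B' = {}" using C by (simp add: coarsens_def is_partition_def)
  have C3: "\<forall>B\<in>T. \<exists>F\<subseteq>S. B = \<Union>F" using C by (simp add: coarsens_def)
  define jB where "jB B = {\<gamma>\<in>I. D \<gamma> \<noteq> {} \<and> D \<gamma> \<subseteq> B}" for B
  have DUj: "DU D (jB B) = B" if B: "B \<in> T" for B
  proof
    show "DU D (jB B) \<subseteq> B" by (auto simp: DU_def jB_def)
  next
    show "B \<subseteq> DU D (jB B)"
    proof
      fix v assume v: "v \<in> B"
      have "\<exists>F\<subseteq>S. B = \<Union>F" using C3 B by simp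
      then obtain F where F: "F \<subseteq> S" "B = \<Union>F" by (elim exE conjE)
      then obtain X where X: "X \<in> F" "v \<in> X" using v by auto
      then obtain \<gamma> where g: "\<gamma> \<in> I" "D \<gamma> \<noteq> {}" "X = D \<gamma>" using F unfolding S_def by blast
      have "D \<gamma> \<subseteq> B" using F X g by blast
      then have "\<gamma> \<in> jB B" using g unfolding jB_def by blast
      then show "v \<in> DU D (jB B)" using X g unfolding DU_def by blast
    qed
  qed
  have inj: "inj_on jB T" by (rule inj_on_inverseI[where g="DU D"]) (rule DUj)
  define J where "J = jB ` T"
  define F where "F j = fs (DU D j)" for j
  have J1: "\<forall>j\<in>J. j \<subseteq> I" unfolding J_def jB_def by blast
  have J2: "\<forall>j\<in>J. \<forall>j'\<in>J. j \<noteq> j' \<longrightarrow> j \<inter> j' = {}"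
  proof (intro ballI impI)
    fix j j' assume j: "j \<in> J" "j' \<in> J" "j \<noteq> j'"
    then obtain B B' where BB: "B \<in> T" "B' \<in> T" "j = jB B" "j' = jB B'" unfolding J_def by blast
    then have "B \<noteq> B'" using j by blast
    then have BB': "B \<inter> B' = {}" using C1' BB by blast
    show "j \<inter> j' = {}"
    proof (rule ccontr)
      assume "j \<inter> j' \<noteq> {}"
      then obtain \<gamma> where "\<gamma> \<in> jB B" "\<gamma> \<in> jB B'" using BB by blast
      then have "D \<gamma> \<subseteq> B \<inter> B'" "D \<gamma> \<noteq> {}" unfolding jB_def by auto
      then show False using BB' by blast
    qed
  qed
  have J3: "\<forall>j\<in>J. \<forall>m\<in>mems (DU D j). 0 \<le> F j m"
    unfolding J_def F_def using Hn DUj by auto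
  have J4: "(\<forall>j\<in>J. mono_mem (DU D j) (F j)) \<or> (\<forall>j\<in>J. anti_mem (DU D j) (F j))"
    unfolding J_def F_def using Hm DUj by auto
  have main: "(\<integral>\<^sup>+ m. ennreal (\<Prod>j\<in>J. F j (m |` DU D j)) \<partial>measure_pmf (snd \<nu>))
       \<le> (\<Prod>j\<in>J. \<integral>\<^sup>+ m. ennreal (F j (m |` DU D j)) \<partial>measure_pmf (snd \<nu>))"
    by (rule INA_D[OF INA J1 J2 J3 J4])
  have e1: "(\<Prod>j\<in>J. F j (m |` DU D j)) = (\<Prod>A\<in>T. fs A (m |` A))" for m
    unfolding J_def F_def by (simp add: prod.reindex[OF inj] DUj)
  have e2: "(\<Prod>j\<in>J. \<integral>\<^sup>+ m. ennreal (F j (m |` DU D j)) \<partial>measure_pmf (snd \<nu>))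
     = (\<Prod>A\<in>T. \<integral>\<^sup>+ m. ennreal (fs A (m |` A)) \<partial>measure_pmf (snd \<nu>))"
    unfolding J_def F_def by (simp add: prod.reindex[OF inj] DUj)
  show "(\<integral>\<^sup>+ m. ennreal (\<Prod>A\<in>T. fs A (m |` A)) \<partial>measure_pmf (snd \<nu>))
         \<le> (\<Prod>A\<in>T. \<integral>\<^sup>+ m. ennreal (fs A (m |` A)) \<partial>measure_pmf (snd \<nu>))"
    using main unfolding e1 e2 .
qed

lemma supp_mems:
  assumes "wf_dist \<nu>" "m \<in> set_pmf (snd \<nu>)" "A \<subseteq> dmn \<nu>"
  shows "m |` A \<in> mems A"
proof -
  have "\<forall>m\<in>set_pmf (snd \<nu>). dom m = fst \<nu>" using assms(1) unfolding wf_dist_def by (elim conjE)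
  then have "dom m = dmn \<nu>" using assms(2) unfolding dmn_def by simp
  then show ?thesis using assms(3) unfolding mems_def by auto
qed

lemma PNA_to_INA:
  fixes D :: "nat \<Rightarrow> 'v set" and \<nu> :: "'v dist"
  assumes PNA: "PNA \<nu> {D \<gamma> | \<gamma>. \<gamma> \<in> I \<and> D \<gamma> \<noteq> {}}" and fin: "finite I"
    and disj: "\<forall>\<gamma>\<in>I. \<forall>\<gamma>'\<in>I. \<gamma> \<noteq> \<gamma>' \<longrightarrow> D \<gamma> \<inter> D \<gamma>' = {}"
    and sub: "\<forall>\<gamma>\<in>I. D \<gamma> \<subseteq> dmn \<nu>" and wf: "wf_dist \<nu>"
  shows "INA (snd \<nu>) D I"
  unfolding INA_def
proof (intro allI impI)
  define S where "S = {D \<gamma> | \<gamma>. \<gamma> \<in> I \<and> D \<gamma> \<noteq> {}}"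
  fix J :: "nat set set" and F :: "nat set \<Rightarrow> 'v mem \<Rightarrow> real"
  assume H: "(\<forall>j\<in>J. j \<subseteq> I) \<and> (\<forall>j\<in>J. \<forall>j'\<in>J. j \<noteq> j' \<longrightarrow> j \<inter> j' = {}) \<and>
     (\<forall>j\<in>J. \<forall>m\<in>mems (DU D j). 0 \<le> F j m) \<and>
     ((\<forall>j\<in>J. mono_mem (DU D j) (F j)) \<or> (\<forall>j\<in>J. anti_mem (DU D j) (F j)))"
  have H1: "\<forall>j\<in>J. j \<subseteq> I" using H by (elim conjE)
  have H2: "\<forall>j\<in>J. \<forall>j'\<in>J. j \<noteq> j' \<longrightarrow> j \<inter> j' = {}" using H by (elim conjE)
  have H3: "\<forall>j\<in>J. \<forall>m\<in>mems (DU D j). 0 \<le> F j m" using H by (elim conjE)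
  have H4: "(\<forall>j\<in>J. mono_mem (DU D j) (F j)) \<or> (\<forall>j\<in>J. anti_mem (DU D j) (F j))" using H by (elim conjE)
  have finJ: "finite J"
  proof (rule finite_subset)
    show "J \<subseteq> Pow I" using H1 by auto
    show "finite (Pow I)" using fin by simp
  qed
  have DUsub: "DU D j \<subseteq> dmn \<nu>" if "j \<in> J" for j
    using that H1 sub unfolding DU_def by blast
  have nonneg: "0 \<le> F j (m |` DU D j)" if "m \<in> set_pmf (snd \<nu>)" "j \<in> J" for m j
    using H3 that supp_mems[OF wf that(1) DUsub[OF that(2)]] by blast
  have DUdisj: "DU D j \<inter> DU D j' = {}" if jj: "j \<in> J" "j' \<in> J" "j \<noteq> j'" for j j'
  proof (rule ccontr)
    assume "DU D j \<inter> DU D j' \<noteq> {}"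
    then obtain x \<gamma> \<gamma>' where g: "\<gamma> \<in> j" "x \<in> D \<gamma>" "\<gamma>' \<in> j'" "x \<in> D \<gamma>'" unfolding DU_def by blast
    have "j \<inter> j' = {}" using H2 jj by blast
    then have "\<gamma> \<noteq> \<gamma>'" using g by blast
    moreover have "\<gamma> \<in> I" "\<gamma>' \<in> I" using g H1 jj by blast+
    ultimately have "D \<gamma> \<inter> D \<gamma>' = {}" using disj by blast
    then show False using g by blast
  qed
  define J1 where "J1 = {j\<in>J. DU D j \<noteq> {}}"
  define J0 where "J0 = {j\<in>J. DU D j = {}}"
  have J01: "J = J0 \<union> J1" "J0 \<inter> J1 = {}" unfolding J0_def J1_def by auto
  have fin01: "finite J0" "finite J1" using finJ unfolding J0_def J1_def by auto
  define c where "c = (\<Prod>j\<in>J0. F j Map.empty)"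
  have F0: "0 \<le> F j Map.empty" if "j \<in> J0" for j
  proof -
    have "Map.empty \<in> mems (DU D j)" using that unfolding J0_def mems_def by auto
    then show ?thesis using H3 that unfolding J0_def by blast
  qed
  have c0: "0 \<le> c" unfolding c_def using F0 by (simp add: prod_nonneg)
  have splitP: "(\<Prod>j\<in>J. F j (m |` DU D j)) = c * (\<Prod>j\<in>J1. F j (m |` DU D j))" for m
  proof -
    have "(\<Prod>j\<in>J. F j (m |` DU D j)) = (\<Prod>j\<in>J0. F j (m |` DU D j)) * (\<Prod>j\<in>J1. F j (m |` DU D j))"
      unfolding J01(1) using fin01 J01(2) by (rule prod.union_disjoint)
    moreover have "(\<Prod>j\<in>J0. F j (m |` DU D j)) = c"
      unfolding c_def by (rule prod.cong) (auto simp: J0_def)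
    ultimately show ?thesis by simp
  qed
  have LHS: "(\<integral>\<^sup>+ m. ennreal (\<Prod>j\<in>J. F j (m |` DU D j)) \<partial>measure_pmf (snd \<nu>))
     = ennreal c * (\<integral>\<^sup>+ m. ennreal (\<Prod>j\<in>J1. F j (m |` DU D j)) \<partial>measure_pmf (snd \<nu>))"
    unfolding splitP ennreal_mult'[OF c0] by (rule nn_integral_cmult) simp
  have RHS: "(\<Prod>j\<in>J. \<integral>\<^sup>+ m. ennreal (F j (m |` DU D j)) \<partial>measure_pmf (snd \<nu>))
     = ennreal c * (\<Prod>j\<in>J1. \<integral>\<^sup>+ m. ennreal (F j (m |` DU D j)) \<partial>measure_pmf (snd \<nu>))"
  proof -
    have "(\<Prod>j\<in>J. \<integral>\<^sup>+ m. ennreal (F j (m |` DU D j)) \<partial>measure_pmf (snd \<nu>))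
      = (\<Prod>j\<in>J0. \<integral>\<^sup>+ m. ennreal (F j (m |` DU D j)) \<partial>measure_pmf (snd \<nu>)) *
        (\<Prod>j\<in>J1. \<integral>\<^sup>+ m. ennreal (F j (m |` DU D j)) \<partial>measure_pmf (snd \<nu>))"
      unfolding J01(1) using fin01 J01(2) by (rule prod.union_disjoint)
    moreover have "(\<Prod>j\<in>J0. \<integral>\<^sup>+ m. ennreal (F j (m |` DU D j)) \<partial>measure_pmf (snd \<nu>))
        = (\<Prod>j\<in>J0. ennreal (F j Map.empty))"
      by (rule prod.cong) (auto simp: J0_def measure_pmf.emeasure_space_1)
    moreover have "(\<Prod>j\<in>J0. ennreal (F j Map.empty)) = ennreal c"
      unfolding c_def using F0 by (rule prod_ennreal)
    ultimately show ?thesis by simp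
  qed
  have MAIN: "(\<integral>\<^sup>+ m. ennreal (\<Prod>j\<in>J1. F j (m |` DU D j)) \<partial>measure_pmf (snd \<nu>))
     \<le> (\<Prod>j\<in>J1. \<integral>\<^sup>+ m. ennreal (F j (m |` DU D j)) \<partial>measure_pmf (snd \<nu>))"
  proof -
    have J1J: "j \<in> J" if "j \<in> J1" for j using that unfolding J1_def by simp
    have J1ne: "DU D j \<noteq> {}" if "j \<in> J1" for j using that unfolding J1_def by simp
    have inj: "inj_on (DU D) J1"
    proof (rule inj_onI)
      fix j j' assume jj: "j \<in> J1" "j' \<in> J1" "DU D j = DU D j'"
      show "j = j'"
      proof (rule ccontr)
        assume "j \<noteq> j'"
        then have "DU D j \<inter> DU D j' = {}" using DUdisj J1J jj by blast
        then have "DU D j = {}" using jj(3) by simp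
        then show False using J1ne jj(1) by blast
      qed
    qed
    define U where "U = \<Union>(DU D ` J1)"
    define R where "R = \<Union>S - U"
    define T where "T = DU D ` J1 \<union> ({R} - {{}})"
    define fs where "fs B = (if B \<in> DU D ` J1 then F (inv_into J1 (DU D) B) else (\<lambda>_. 1))" for B
    have fsj: "fs (DU D j) = F j" if "j \<in> J1" for j
      using that inj unfolding fs_def by simp
    have RU: "R \<inter> U = {}" unfolding R_def by blast
    have DUU: "DU D j \<subseteq> U" if "j \<in> J1" for j using that unfolding U_def by blast
    have Rnot: "B \<notin> DU D ` J1" if "B \<in> {R} - {{}}" for B
    proof
      assume "B \<in> DU D ` J1"
      then obtain j where j: "j \<in> J1" "B = DU D j" by blast
      have "B = R" "B \<noteq> {}" using that by auto
      then have "R \<subseteq> U" using DUU[OF j(1)] j(2) by simp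
      then show False using RU \<open>B = R\<close> \<open>B \<noteq> {}\<close> by blast
    qed
    have fsR: "fs B = (\<lambda>_. 1)" if "B \<in> {R} - {{}}" for B
      using Rnot[OF that] unfolding fs_def by simp
    have Tdisj: "DU D ` J1 \<inter> ({R} - {{}}) = {}" using Rnot by blast
    have finT: "finite (DU D ` J1)" "finite ({R} - {{}})" using fin01 by auto
    have DUS: "DU D j = \<Union>{D \<gamma> | \<gamma>. \<gamma> \<in> j \<and> D \<gamma> \<noteq> {}}" for j
      unfolding DU_def by blast
    have Rchar: "R = \<Union>{D \<gamma> | \<gamma>. \<gamma> \<in> I \<and> D \<gamma> \<noteq> {} \<and> \<gamma> \<notin> \<Union>J1}"
    proof
      show "R \<subseteq> \<Union>{D \<gamma> | \<gamma>. \<gamma> \<in> I \<and> D \<gamma> \<noteq> {} \<and> \<gamma> \<notin> \<Union>J1}"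
      proof
        fix x assume x: "x \<in> R"
        then have xS: "x \<in> \<Union>S" and xU: "x \<notin> U" unfolding R_def by auto
        from xS obtain \<gamma> where g: "\<gamma> \<in> I" "D \<gamma> \<noteq> {}" "x \<in> D \<gamma>" unfolding S_def by blast
        have "\<gamma> \<notin> \<Union>J1"
        proof
          assume "\<gamma> \<in> \<Union>J1"
          then obtain j where "j \<in> J1" "\<gamma> \<in> j" by blast
          then have "x \<in> U" using g unfolding U_def DU_def by blast
          then show False using xU by blast
        qed
        then show "x \<in> \<Union>{D \<gamma> | \<gamma>. \<gamma> \<in> I \<and> D \<gamma> \<noteq> {} \<and> \<gamma> \<notin> \<Union>J1}" using g by blast
      qed
    next
      show "\<Union>{D \<gamma> | \<gamma>. \<gamma> \<in> I \<and> D \<gamma> \<noteq> {} \<and> \<gamma> \<notin> \<Union>J1} \<subseteq> R"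
      proof
        fix x assume "x \<in> \<Union>{D \<gamma> | \<gamma>. \<gamma> \<in> I \<and> D \<gamma> \<noteq> {} \<and> \<gamma> \<notin> \<Union>J1}"
        then obtain \<gamma> where g: "\<gamma> \<in> I" "D \<gamma> \<noteq> {}" "\<gamma> \<notin> \<Union>J1" "x \<in> D \<gamma>" by blast
        have xS: "x \<in> \<Union>S" using g unfolding S_def by blast
        have "x \<notin> U"
        proof
          assume "x \<in> U"
          then obtain j \<gamma>' where j: "j \<in> J1" "\<gamma>' \<in> j" "x \<in> D \<gamma>'" unfolding U_def DU_def by blast
          have "\<gamma>' \<noteq> \<gamma>" using j g(3) by blast
          moreover have "\<gamma>' \<in> I" using j H1 J1J by blast
          ultimately have "D \<gamma>' \<inter> D \<gamma> = {}" using disj g(1) by blast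
          then show False using j g by blast
        qed
        then show "x \<in> R" using xS unfolding R_def by blast
      qed
    qed
    have coar: "coarsens T S"
      unfolding coarsens_def is_partition_def
    proof (intro conjI ballI impI)
      fix A assume "A \<in> T"
      then show "A \<noteq> {}" unfolding T_def using J1ne by auto
    next
      fix A B assume AB: "A \<in> T" "B \<in> T" "A \<noteq> B"
      show "A \<inter> B = {}"
      proof (cases "A \<in> DU D ` J1")
        case True
        then obtain j where j: "j \<in> J1" "A = DU D j" by blast
        show ?thesis
        proof (cases "B \<in> DU D ` J1")
          case True
          then obtain j' where j': "j' \<in> J1" "B = DU D j'" by blast
          have "j \<noteq> j'" using AB j j' by blast
          then show ?thesis using DUdisj J1J j j' by blast
        next
          case False
          then have "B = R" using AB unfolding T_def by blast
          then show ?thesis using RU DUU[OF j(1)] j(2) by blast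
        qed
      next
        case False
        then have A: "A = R" using AB unfolding T_def by blast
        then have "B \<in> DU D ` J1" using AB unfolding T_def by blast
        then obtain j' where j': "j' \<in> J1" "B = DU D j'" by blast
        then show ?thesis using RU DUU[OF j'(1)] A by blast
      qed
    next
      show "\<Union>T = \<Union>S"
      proof
        have "U \<subseteq> \<Union>S"
        proof
          fix x assume "x \<in> U"
          then obtain j \<gamma> where j: "j \<in> J1" "\<gamma> \<in> j" "x \<in> D \<gamma>" unfolding U_def DU_def by blast
          have "\<gamma> \<in> I" using j H1 J1J by blast
          then show "x \<in> \<Union>S" using j unfolding S_def by blast
        qed
        moreover have "\<Union>T \<subseteq> U \<union> R" unfolding T_def U_def by blast
        ultimately show "\<Union>T \<subseteq> \<Union>S" unfolding R_def by blast
      next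
        show "\<Union>S \<subseteq> \<Union>T"
        proof
          fix x assume x: "x \<in> \<Union>S"
          show "x \<in> \<Union>T"
          proof (cases "x \<in> U")
            case True
            then show ?thesis unfolding U_def T_def by blast
          next
            case False
            then have "x \<in> R" using x unfolding R_def by blast
            then have "R \<in> T" unfolding T_def by blast
            then show ?thesis using \<open>x \<in> R\<close> by blast
          qed
        qed
      qed
    next
      fix B assume B: "B \<in> T"
      show "\<exists>F\<subseteq>S. B = \<Union>F"
      proof (cases "B \<in> DU D ` J1")
        case True
        then obtain j where j: "j \<in> J1" "B = DU D j" by blast
        have sub1: "{D \<gamma> | \<gamma>. \<gamma> \<in> j \<and> D \<gamma> \<noteq> {}} \<subseteq> S"
          using j H1 J1J unfolding S_def by blast
        have "B = \<Union>{D \<gamma> | \<gamma>. \<gamma> \<in> j \<and> D \<gamma> \<noteq> {}}" using j(2) DUS[of j] by simp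
        with sub1 show ?thesis by (intro exI[of _ "{D \<gamma> | \<gamma>. \<gamma> \<in> j \<and> D \<gamma> \<noteq> {}}"] conjI)
      next
        case False
        then have BR: "B = R" using B unfolding T_def by auto
        have sub2: "{D \<gamma> | \<gamma>. \<gamma> \<in> I \<and> D \<gamma> \<noteq> {} \<and> \<gamma> \<notin> \<Union>J1} \<subseteq> S"
          unfolding S_def by blast
        have "B = \<Union>{D \<gamma> | \<gamma>. \<gamma> \<in> I \<and> D \<gamma> \<noteq> {} \<and> \<gamma> \<notin> \<Union>J1}" using BR Rchar by simp
        with sub2 show ?thesis by (intro exI[of _ "{D \<gamma> | \<gamma>. \<gamma> \<in> I \<and> D \<gamma> \<noteq> {} \<and> \<gamma> \<notin> \<Union>J1}"] conjI)
      qed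
    qed
    have fsnn: "\<forall>A\<in>T. \<forall>m\<in>mems A. 0 \<le> fs A m"
    proof (intro ballI)
      fix A m assume A: "A \<in> T" and m: "m \<in> mems A"
      show "0 \<le> fs A m"
      proof (cases "A \<in> DU D ` J1")
        case True
        then obtain j where j: "j \<in> J1" "A = DU D j" by blast
        then show ?thesis using H3 J1J m fsj by auto
      next
        case False
        then have "A \<in> {R} - {{}}" using A unfolding T_def by auto
        then have "fs A = (\<lambda>_. 1)" by (rule fsR)
        then show ?thesis by simp
      qed
    qed
    have fsmono: "(\<forall>A\<in>T. mono_mem A (fs A)) \<or> (\<forall>A\<in>T. anti_mem A (fs A))"
    proof -
      have c1: "mono_mem A (\<lambda>_. 1)" "anti_mem A (\<lambda>_. 1)" for A :: "'v set"
        unfolding mono_mem_def anti_mem_def by auto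
      have split: "A \<in> DU D ` J1 \<or> A \<in> {R} - {{}}" if "A \<in> T" for A
        using that unfolding T_def by simp
      from H4 show ?thesis
      proof
        assume M: "\<forall>j\<in>J. mono_mem (DU D j) (F j)"
        have "mono_mem A (fs A)" if "A \<in> T" for A
          using split[OF that]
        proof
          assume "A \<in> DU D ` J1"
          then obtain j where j: "j \<in> J1" "A = DU D j" by blast
          then show ?thesis using M J1J fsj by auto
        next
          assume "A \<in> {R} - {{}}"
          then have "fs A = (\<lambda>_. 1)" by (rule fsR)
          then show ?thesis using c1 by simp
        qed
        then show ?thesis by blast
      next
        assume M: "\<forall>j\<in>J. anti_mem (DU D j) (F j)"
        have "anti_mem A (fs A)" if "A \<in> T" for A
          using split[OF that]
        proof
          assume "A \<in> DU D ` J1"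
          then obtain j where j: "j \<in> J1" "A = DU D j" by blast
          then show ?thesis using M J1J fsj by auto
        next
          assume "A \<in> {R} - {{}}"
          then have "fs A = (\<lambda>_. 1)" by (rule fsR)
          then show ?thesis using c1 by simp
        qed
        then show ?thesis by blast
      qed
    qed
    have P: "(\<integral>\<^sup>+ m. ennreal (\<Prod>A\<in>T. fs A (m |` A)) \<partial>measure_pmf (snd \<nu>))
         \<le> (\<Prod>A\<in>T. \<integral>\<^sup>+ m. ennreal (fs A (m |` A)) \<partial>measure_pmf (snd \<nu>))"
      using PNA_D[OF PNA[folded S_def] coar fsnn fsmono] .
    have e1: "(\<Prod>A\<in>T. fs A (m |` A)) = (\<Prod>j\<in>J1. F j (m |` DU D j))" for m
    proof -
      have "(\<Prod>A\<in>T. fs A (m |` A)) = (\<Prod>A\<in>DU D ` J1. fs A (m |` A)) * (\<Prod>A\<in>{R} - {{}}. fs A (m |` A))"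
        unfolding T_def using finT Tdisj by (rule prod.union_disjoint)
      moreover have "(\<Prod>A\<in>{R} - {{}}. fs A (m |` A)) = 1"
      proof (intro prod.neutral ballI)
        fix A assume "A \<in> {R} - {{}}"
        then have "fs A = (\<lambda>_. 1)" by (rule fsR)
        then show "fs A (m |` A) = 1" by simp
      qed
      moreover have "(\<Prod>A\<in>DU D ` J1. fs A (m |` A)) = (\<Prod>j\<in>J1. F j (m |` DU D j))"
        by (simp add: prod.reindex[OF inj] fsj)
      ultimately show ?thesis by simp
    qed
    have e2: "(\<Prod>A\<in>T. \<integral>\<^sup>+ m. ennreal (fs A (m |` A)) \<partial>measure_pmf (snd \<nu>))
       = (\<Prod>j\<in>J1. \<integral>\<^sup>+ m. ennreal (F j (m |` DU D j)) \<partial>measure_pmf (snd \<nu>))"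
    proof -
      have "(\<Prod>A\<in>T. \<integral>\<^sup>+ m. ennreal (fs A (m |` A)) \<partial>measure_pmf (snd \<nu>))
         = (\<Prod>A\<in>DU D ` J1. \<integral>\<^sup>+ m. ennreal (fs A (m |` A)) \<partial>measure_pmf (snd \<nu>)) *
           (\<Prod>A\<in>{R} - {{}}. \<integral>\<^sup>+ m. ennreal (fs A (m |` A)) \<partial>measure_pmf (snd \<nu>))"
        unfolding T_def using finT Tdisj by (rule prod.union_disjoint)
      moreover have "(\<Prod>A\<in>{R} - {{}}. \<integral>\<^sup>+ m. ennreal (fs A (m |` A)) \<partial>measure_pmf (snd \<nu>)) = 1"
      proof (intro prod.neutral ballI)
        fix A assume "A \<in> {R} - {{}}"
        then have "fs A = (\<lambda>_. 1)" by (rule fsR)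
        then show "(\<integral>\<^sup>+ m. ennreal (fs A (m |` A)) \<partial>measure_pmf (snd \<nu>)) = 1"
          by (simp add: measure_pmf.emeasure_space_1)
      qed
      moreover have "(\<Prod>A\<in>DU D ` J1. \<integral>\<^sup>+ m. ennreal (fs A (m |` A)) \<partial>measure_pmf (snd \<nu>))
          = (\<Prod>j\<in>J1. \<integral>\<^sup>+ m. ennreal (F j (m |` DU D j)) \<partial>measure_pmf (snd \<nu>))"
        by (simp add: prod.reindex[OF inj] fsj)
      ultimately show ?thesis by simp
    qed
    show ?thesis using P unfolding e1 e2 .
  qed
  show "(\<integral>\<^sup>+ m. ennreal (\<Prod>j\<in>J. F j (m |` DU D j)) \<partial>measure_pmf (snd \<nu>))
       \<le> (\<Prod>j\<in>J. \<integral>\<^sup>+ m. ennreal (F j (m |` DU D j)) \<partial>measure_pmf (snd \<nu>))"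
    unfolding LHS RHS by (rule mult_left_mono[OF MAIN]) simp
qed

lemma sat_bigconj:
  "sat \<sigma> \<nu> (bigconj (Suc k) (\<lambda>\<alpha>. Bnd (x \<alpha>))) \<longleftrightarrow> (\<forall>\<alpha><Suc k. x \<alpha> \<in> dom \<sigma> \<union> dmn \<nu>)"
proof (induction k)
  case 0
  then show ?case by simp
next
  case (Suc k)
  then show ?case by (auto simp: less_Suc_eq)
qed

lemma oplus_D:
  assumes "\<mu> \<in> oplus \<mu>1 \<mu>2"
  shows "dmn \<mu>1 \<inter> dmn \<mu>2 = {}" "wf_dist \<mu>" "dmn \<mu> = dmn \<mu>1 \<union> dmn \<mu>2"
    "\<forall>S T. is_partition S \<and> \<Union>S \<subseteq> dmn \<mu>1 \<and> is_partition T \<and> \<Union>T \<subseteq> dmn \<mu>2 \<and>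
                     PNA \<mu>1 S \<and> PNA \<mu>2 T \<longrightarrow> PNA \<mu> (S \<union> T)"
proof -
  have ne: "dmn \<mu>1 \<inter> dmn \<mu>2 = {}"
  proof (rule ccontr)
    assume "dmn \<mu>1 \<inter> dmn \<mu>2 \<noteq> {}"
    then have "oplus \<mu>1 \<mu>2 = {}" unfolding oplus_def by simp
    then show False using assms by simp
  qed
  then have M: "wf_dist \<mu> \<and> dmn \<mu> = dmn \<mu>1 \<union> dmn \<mu>2 \<and>
              marg (dmn \<mu>1) \<mu> = \<mu>1 \<and> marg (dmn \<mu>2) \<mu> = \<mu>2 \<and>
              (\<forall>S T. is_partition S \<and> \<Union>S \<subseteq> dmn \<mu>1 \<and> is_partition T \<and> \<Union>T \<subseteq> dmn \<mu>2 \<and>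
                     PNA \<mu>1 S \<and> PNA \<mu>2 T \<longrightarrow> PNA \<mu> (S \<union> T))"
    using assms unfolding oplus_def by simp
  show "dmn \<mu>1 \<inter> dmn \<mu>2 = {}" by (rule ne)
  show "wf_dist \<mu>" using M by (elim conjE)
  show "dmn \<mu> = dmn \<mu>1 \<union> dmn \<mu>2" using M by (elim conjE)
  show "\<forall>S T. is_partition S \<and> \<Union>S \<subseteq> dmn \<mu>1 \<and> is_partition T \<and> \<Union>T \<subseteq> dmn \<mu>2 \<and>
                     PNA \<mu>1 S \<and> PNA \<mu>2 T \<longrightarrow> PNA \<mu> (S \<union> T)" using M by (elim conjE)
qed

lemma X_lemma:
  fixes \<sigma> :: "'v mem" and x :: "nat \<Rightarrow> nat \<Rightarrow> 'v" and K :: "nat \<Rightarrow> nat"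
  shows "wf_dist \<nu> \<Longrightarrow> sat \<sigma> \<nu> (bigsep (Suc n) (\<lambda>\<gamma>. bigconj (K \<gamma> + 1) (\<lambda>\<alpha>. Bnd (x \<gamma> \<alpha>)))) \<Longrightarrow>
    \<exists>D. (\<forall>\<gamma><Suc n. D \<gamma> \<subseteq> dmn \<nu>) \<and> (\<forall>\<gamma>\<in>{..<Suc n}. \<forall>\<gamma>'\<in>{..<Suc n}. \<gamma> \<noteq> \<gamma>' \<longrightarrow> D \<gamma> \<inter> D \<gamma>' = {}) \<and>
       (\<forall>\<gamma><Suc n. \<forall>\<alpha><K \<gamma> + 1. x \<gamma> \<alpha> \<in> dom \<sigma> \<union> D \<gamma>) \<and> INA (snd \<nu>) D {..<Suc n}"
proof (induction n arbitrary: \<nu>)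
  case 0
  define D :: "nat \<Rightarrow> 'v set" where "D = (\<lambda>_. dmn \<nu>)"
  have X: "\<forall>\<alpha><K 0 + 1. x 0 \<alpha> \<in> dom \<sigma> \<union> dmn \<nu>"
    using 0(2) sat_bigconj[of \<sigma> \<nu> "K 0" "x 0"] by simp
  have P: "PNA \<nu> {D \<gamma> | \<gamma>. \<gamma> \<in> {..<Suc 0} \<and> D \<gamma> \<noteq> {}}"
  proof (rule PNA_trivial)
    show "{D \<gamma> | \<gamma>. \<gamma> \<in> {..<Suc 0} \<and> D \<gamma> \<noteq> {}} = {} \<or> (\<exists>A. {D \<gamma> | \<gamma>. \<gamma> \<in> {..<Suc 0} \<and> D \<gamma> \<noteq> {}} = {A})"
      unfolding D_def by (cases "dmn \<nu> = {}") auto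
  qed
  have "INA (snd \<nu>) D {..<Suc 0}"
    by (rule PNA_to_INA[OF P]) (auto simp: D_def 0(1))
  then show ?case using X unfolding D_def by (intro exI[of _ D]) (auto simp: D_def)
next
  case (Suc n)
  let ?P = "\<lambda>\<gamma>. bigconj (K \<gamma> + 1) (\<lambda>\<alpha>. Bnd (x \<gamma> \<alpha>))"
  from Suc.prems(2) obtain \<mu>' \<mu>1 \<mu>2 where
    W: "wf_dist \<mu>'" "wf_dist \<mu>1" "wf_dist \<mu>2" and le: "dist_le \<mu>' \<nu>" and op: "\<mu>' \<in> oplus \<mu>1 \<mu>2"
    and s1: "sat \<sigma> \<mu>1 (bigsep (Suc n) ?P)" and s2: "sat \<sigma> \<mu>2 (?P (Suc n))"
    by auto
  obtain D where D1: "\<forall>\<gamma><Suc n. D \<gamma> \<subseteq> dmn \<mu>1"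
    and D2: "\<forall>\<gamma>\<in>{..<Suc n}. \<forall>\<gamma>'\<in>{..<Suc n}. \<gamma> \<noteq> \<gamma>' \<longrightarrow> D \<gamma> \<inter> D \<gamma>' = {}"
    and D3: "\<forall>\<gamma><Suc n. \<forall>\<alpha><K \<gamma> + 1. x \<gamma> \<alpha> \<in> dom \<sigma> \<union> D \<gamma>"
    and D4: "INA (snd \<mu>1) D {..<Suc n}"
    using Suc.IH[OF W(2) s1] by blast
  have O1: "dmn \<mu>1 \<inter> dmn \<mu>2 = {}" and O3: "dmn \<mu>' = dmn \<mu>1 \<union> dmn \<mu>2"
    and O4: "\<forall>S T. is_partition S \<and> \<Union>S \<subseteq> dmn \<mu>1 \<and> is_partition T \<and> \<Union>T \<subseteq> dmn \<mu>2 \<and>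
                     PNA \<mu>1 S \<and> PNA \<mu>2 T \<longrightarrow> PNA \<mu>' (S \<union> T)"
    using oplus_D[OF op] by blast+
  have le': "dmn \<mu>' \<subseteq> dmn \<nu>" using le unfolding dist_le_def by simp
  define D' where "D' = D(Suc n := dmn \<mu>2)"
  define S where "S = {D \<gamma> | \<gamma>. \<gamma> \<in> {..<Suc n} \<and> D \<gamma> \<noteq> {}}"
  define T where "T = {dmn \<mu>2} - {{}}"
  have PS: "PNA \<mu>1 S" unfolding S_def by (rule INA_to_PNA[OF D4 D2])
  have PT: "PNA \<mu>2 T" by (rule PNA_trivial) (auto simp: T_def)
  have iS: "is_partition S" unfolding is_partition_def
  proof (intro conjI ballI impI)
    fix A assume "A \<in> S" then show "A \<noteq> {}" unfolding S_def by blast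
  next
    fix A B assume AB: "A \<in> S" "B \<in> S" "A \<noteq> B"
    then obtain g g' where g: "g < Suc n" "A = D g" "g' < Suc n" "B = D g'" unfolding S_def by blast
    then have "g \<noteq> g'" using AB by blast
    then show "A \<inter> B = {}" using D2 g by auto
  qed
  have uS: "\<Union>S \<subseteq> dmn \<mu>1" using D1 unfolding S_def by blast
  have iT: "is_partition T" unfolding is_partition_def T_def by auto
  have uT: "\<Union>T \<subseteq> dmn \<mu>2" unfolding T_def by auto
  have "is_partition S \<and> \<Union>S \<subseteq> dmn \<mu>1 \<and> is_partition T \<and> \<Union>T \<subseteq> dmn \<mu>2 \<and>
                     PNA \<mu>1 S \<and> PNA \<mu>2 T \<longrightarrow> PNA \<mu>' (S \<union> T)"
    using O4 by (elim allE)
  then have PST: "PNA \<mu>' (S \<union> T)" by (rule mp) (intro conjI iS uS iT uT PS PT)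
  have ST: "S \<union> T = {D' \<gamma> | \<gamma>. \<gamma> \<in> {..<Suc (Suc n)} \<and> D' \<gamma> \<noteq> {}}"
  proof (rule set_eqI)
    fix A
    show "A \<in> S \<union> T \<longleftrightarrow> A \<in> {D' \<gamma> | \<gamma>. \<gamma> \<in> {..<Suc (Suc n)} \<and> D' \<gamma> \<noteq> {}}"
    proof
      assume "A \<in> S \<union> T"
      then show "A \<in> {D' \<gamma> | \<gamma>. \<gamma> \<in> {..<Suc (Suc n)} \<and> D' \<gamma> \<noteq> {}}"
      proof (elim UnE)
        assume "A \<in> S"
        then obtain g where g: "g < Suc n" "A = D g" "D g \<noteq> {}" unfolding S_def by blast
        then have "A = D' g" "D' g \<noteq> {}" "g \<in> {..<Suc (Suc n)}" unfolding D'_def by auto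
        then show ?thesis by blast
      next
        assume "A \<in> T"
        then have "A = D' (Suc n)" "D' (Suc n) \<noteq> {}" "Suc n \<in> {..<Suc (Suc n)}" unfolding T_def D'_def by auto
        then show ?thesis by blast
      qed
    next
      assume "A \<in> {D' \<gamma> | \<gamma>. \<gamma> \<in> {..<Suc (Suc n)} \<and> D' \<gamma> \<noteq> {}}"
      then obtain g where g: "g < Suc (Suc n)" "A = D' g" "D' g \<noteq> {}" by blast
      show "A \<in> S \<union> T"
      proof (cases "g = Suc n")
        case True
        then have "A \<in> T" using g unfolding T_def D'_def by auto
        then show ?thesis by blast
      next
        case False
        then have "g < Suc n" using g by simp
        then have "A \<in> S" using g False unfolding S_def D'_def by auto
        then show ?thesis by blast
      qed
    qed
  qed
  have D'disj: "\<forall>\<gamma>\<in>{..<Suc (Suc n)}. \<forall>\<gamma>'\<in>{..<Suc (Suc n)}. \<gamma> \<noteq> \<gamma>' \<longrightarrow> D' \<gamma> \<inter> D' \<gamma>' = {}"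
  proof (intro ballI impI)
    fix g g' assume g: "g \<in> {..<Suc (Suc n)}" "g' \<in> {..<Suc (Suc n)}" "g \<noteq> g'"
    show "D' g \<inter> D' g' = {}"
    proof (cases "g = Suc n")
      case True
      then have "g' < Suc n" using g by auto
      then show ?thesis using True D1 O1 unfolding D'_def by auto
    next
      case False
      then have gl: "g < Suc n" using g by auto
      show ?thesis
      proof (cases "g' = Suc n")
        case True
        then show ?thesis using gl D1 O1 unfolding D'_def by auto
      next
        case False
        then have "g' < Suc n" using g by auto
        then show ?thesis using gl D2 g(3) unfolding D'_def by auto
      qed
    qed
  qed
  have D'sub: "\<forall>\<gamma>\<in>{..<Suc (Suc n)}. D' \<gamma> \<subseteq> dmn \<mu>'"
  proof
    fix g assume g: "g \<in> {..<Suc (Suc n)}"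
    show "D' g \<subseteq> dmn \<mu>'"
    proof (cases "g = Suc n")
      case True
      then show ?thesis unfolding D'_def using O3 by simp
    next
      case False
      then have "g < Suc n" using g by simp
      then have "D g \<subseteq> dmn \<mu>1" using D1 by blast
      then show ?thesis unfolding D'_def using O3 False by auto
    qed
  qed
  have I': "INA (snd \<mu>') D' {..<Suc (Suc n)}"
    by (rule PNA_to_INA[OF PST[unfolded ST] _ D'disj D'sub W(1)]) simp
  have DU': "DU D' {..<Suc (Suc n)} \<subseteq> dmn \<mu>'" using D'sub unfolding DU_def by blast
  have I: "INA (snd \<nu>) D' {..<Suc (Suc n)}" by (rule INA_transfer[OF le DU' I'])
  have X2: "\<forall>\<alpha><K (Suc n) + 1. x (Suc n) \<alpha> \<in> dom \<sigma> \<union> dmn \<mu>2"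
    using s2 sat_bigconj[of \<sigma> \<mu>2 "K (Suc n)" "x (Suc n)"] by simp
  have A1: "\<forall>\<gamma><Suc (Suc n). D' \<gamma> \<subseteq> dmn \<nu>" using D'sub le' by auto
  have A3: "\<forall>\<gamma><Suc (Suc n). \<forall>\<alpha><K \<gamma> + 1. x \<gamma> \<alpha> \<in> dom \<sigma> \<union> D' \<gamma>"
    using D3 X2 unfolding D'_def by (auto simp: less_Suc_eq)
  show ?case using A1 D'disj A3 I by blast
qed

lemma xs_le:
  fixes \<sigma> :: "'v mem"
  assumes "mem_le A mD mD'" "\<forall>\<alpha><k. X \<alpha> \<in> dom \<sigma> \<union> A"
  shows "list_all2 (\<le>) (map (\<lambda>\<alpha>. eval \<sigma> mD (Var (X \<alpha>))) [0..<k]) (map (\<lambda>\<alpha>. eval \<sigma> mD' (Var (X \<alpha>))) [0..<k])"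
  unfolding list_all2_conv_all_nth
proof (intro conjI allI impI)
  show "length (map (\<lambda>\<alpha>. eval \<sigma> mD (Var (X \<alpha>))) [0..<k]) = length (map (\<lambda>\<alpha>. eval \<sigma> mD' (Var (X \<alpha>))) [0..<k])"
    by simp
next
  fix i assume "i < length (map (\<lambda>\<alpha>. eval \<sigma> mD (Var (X \<alpha>))) [0..<k])"
  then have i: "i < k" by simp
  show "map (\<lambda>\<alpha>. eval \<sigma> mD (Var (X \<alpha>))) [0..<k] ! i \<le> map (\<lambda>\<alpha>. eval \<sigma> mD' (Var (X \<alpha>))) [0..<k] ! i"
  proof (cases "\<sigma> (X i)")
    case None
    then have "X i \<in> A" using assms(2) i by auto
    then have "the (mD (X i)) \<le> the (mD' (X i))" using assms(1) unfolding mem_le_def by blast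
    then show ?thesis using i None by simp
  next
    case (Some r)
    then show ?thesis using i by simp
  qed
qed

lemma YNA:
  fixes \<sigma> :: "'v mem" and \<mu> :: "'v dist" and x :: "nat \<Rightarrow> nat \<Rightarrow> 'v" and y :: "nat \<Rightarrow> 'v"
    and D :: "nat \<Rightarrow> 'v set" and f :: "nat \<Rightarrow> real list \<Rightarrow> real" and K :: "nat \<Rightarrow> nat"
    and T :: "'v set set" and fs :: "'v set \<Rightarrow> 'v mem \<Rightarrow> real"
  assumes sd: "dom \<sigma> \<inter> dmn \<mu> = {}" and wf: "wf_dist \<mu>" and inj: "inj_on y {..<N}"
    and mon: "(\<forall>\<gamma><N. mono_vec (K \<gamma> + 1) (f \<gamma>)) \<or> (\<forall>\<gamma><N. anti_vec (K \<gamma> + 1) (f \<gamma>))"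
    and Dx: "\<forall>\<gamma><N. \<forall>\<alpha><K \<gamma> + 1. x \<gamma> \<alpha> \<in> dom \<sigma> \<union> D \<gamma>"
    and INA: "INA (snd \<mu>) D {..<N}"
    and sim: "\<forall>\<gamma><N. \<forall>m\<in>set_pmf (snd \<mu>). eval \<sigma> m (Var (y \<gamma>)) = f \<gamma> (map (\<lambda>\<alpha>. eval \<sigma> m (Var (x \<gamma> \<alpha>))) [0..<K \<gamma> + 1])"
    and Tp: "is_partition T" and Tsub: "\<Union>T \<subseteq> y ` {..<N} \<inter> dmn \<mu>"
    and nn: "\<forall>A\<in>T. \<forall>m\<in>mems A. 0 \<le> fs A m"
    and fm: "(\<forall>A\<in>T. mono_mem A (fs A)) \<or> (\<forall>A\<in>T. anti_mem A (fs A))"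
  shows "(\<integral>\<^sup>+ m. ennreal (\<Prod>A\<in>T. fs A (m |` A)) \<partial>measure_pmf (snd \<mu>))
         \<le> (\<Prod>A\<in>T. \<integral>\<^sup>+ m. ennreal (fs A (m |` A)) \<partial>measure_pmf (snd \<mu>))"
proof -
  define gam where "gam v = inv_into {..<N} y v" for v
  define xs where "xs \<gamma> m = map (\<lambda>\<alpha>. eval \<sigma> m (Var (x \<gamma> \<alpha>))) [0..<K \<gamma> + 1]" for \<gamma> m
  define \<Phi> where "\<Phi> B m = (\<lambda>v. if v \<in> B then Some (f (gam v) (xs (gam v) m)) else None)" for B m
  define jB where "jB B = {\<gamma>\<in>{..<N}. y \<gamma> \<in> B}" for B
  define J where "J = jB ` T"
  define F where "F j m = fs (y ` j) (\<Phi> (y ` j) m)" for j m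
  have Tne: "\<forall>B\<in>T. B \<noteq> {}" using Tp unfolding is_partition_def by blast
  have Tdisj: "\<forall>B\<in>T. \<forall>B'\<in>T. B \<noteq> B' \<longrightarrow> B \<inter> B' = {}" using Tp unfolding is_partition_def by blast
  have BY: "B \<subseteq> y ` {..<N}" "B \<subseteq> dmn \<mu>" if "B \<in> T" for B using that Tsub by blast+
  have yjB: "y ` jB B = B" if B0: "B \<in> T" for B
  proof
    show "y ` jB B \<subseteq> B" unfolding jB_def by blast
    show "B \<subseteq> y ` jB B"
    proof
      fix v assume v: "v \<in> B"
      then obtain g where g: "g < N" "v = y g" using BY[OF B0] by blast
      then have "g \<in> jB B" unfolding jB_def using v by simp
      then show "v \<in> y ` jB B" using g by blast
    qed
  qed
  have injB: "inj_on jB T" by (rule inj_on_inverseI[where g="(`) y"]) (rule yjB)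
  have gam_y: "gam (y g) = g" if "g < N" for g using that inj unfolding gam_def by simp
  have gam_in: "gam v < N" "y (gam v) = v" if "v \<in> y ` {..<N}" for v
    using that inv_into_into[OF that] f_inv_into_f[OF that] unfolding gam_def by auto
  have FjB: "F (jB B) m = fs B (\<Phi> B m)" if "B \<in> T" for B m
    unfolding F_def using yjB[OF that] by simp
  have PhiMem: "\<Phi> B m \<in> mems B" for B m unfolding mems_def \<Phi>_def by (auto split: if_splits)
  have xDU: "\<forall>\<alpha><K \<gamma> + 1. x \<gamma> \<alpha> \<in> dom \<sigma> \<union> DU D (jB B)" if "\<gamma> \<in> jB B" for \<gamma> B
  proof -
    have "\<gamma> < N" using that unfolding jB_def by simp
    then have "\<forall>\<alpha><K \<gamma> + 1. x \<gamma> \<alpha> \<in> dom \<sigma> \<union> D \<gamma>" using Dx by blast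
    moreover have "D \<gamma> \<subseteq> DU D (jB B)" using that unfolding DU_def by blast
    ultimately show ?thesis by blast
  qed
  have vB: "gam v \<in> jB B" "gam v < N" if "B \<in> T" "v \<in> B" for B v
  proof -
    have "v \<in> y ` {..<N}" using BY[OF that(1)] that(2) by blast
    then have "gam v < N" "y (gam v) = v" using gam_in by blast+
    then show "gam v \<in> jB B" "gam v < N" unfolding jB_def using that(2) by auto
  qed
  have PhiM: "mem_le B (\<Phi> B mD) (\<Phi> B mD')"
    if B: "B \<in> T" and le: "mem_le (DU D (jB B)) mD mD'" and M: "\<forall>\<gamma><N. mono_vec (K \<gamma> + 1) (f \<gamma>)" for B mD mD'
    unfolding mem_le_def
  proof
    fix v assume v: "v \<in> B"
    let ?g = "gam v"
    have g: "?g \<in> jB B" "?g < N" using vB[OF B v] by blast+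
    have "list_all2 (\<le>) (xs ?g mD) (xs ?g mD')" unfolding xs_def by (rule xs_le[OF le xDU[OF g(1)]])
    then have "f ?g (xs ?g mD) \<le> f ?g (xs ?g mD')" using M g(2) unfolding mono_vec_def xs_def by simp
    then show "the (\<Phi> B mD v) \<le> the (\<Phi> B mD' v)" using v unfolding \<Phi>_def by simp
  qed
  have PhiA: "mem_le B (\<Phi> B mD') (\<Phi> B mD)"
    if B: "B \<in> T" and le: "mem_le (DU D (jB B)) mD mD'" and M: "\<forall>\<gamma><N. anti_vec (K \<gamma> + 1) (f \<gamma>)" for B mD mD'
    unfolding mem_le_def
  proof
    fix v assume v: "v \<in> B"
    let ?g = "gam v"
    have g: "?g \<in> jB B" "?g < N" using vB[OF B v] by blast+
    have "list_all2 (\<le>) (xs ?g mD) (xs ?g mD')" unfolding xs_def by (rule xs_le[OF le xDU[OF g(1)]])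
    then have "f ?g (xs ?g mD') \<le> f ?g (xs ?g mD)" using M g(2) unfolding anti_vec_def xs_def by simp
    then show "the (\<Phi> B mD' v) \<le> the (\<Phi> B mD v)" using v unfolding \<Phi>_def by simp
  qed
  have key: "\<Phi> B (m |` DU D (jB B)) = m |` B" if B: "B \<in> T" and m: "m \<in> set_pmf (snd \<mu>)" for B m
  proof (rule ext)
    fix v
    show "\<Phi> B (m |` DU D (jB B)) v = (m |` B) v"
    proof (cases "v \<in> B")
      case False
      then show ?thesis unfolding \<Phi>_def by simp
    next
      case True
      let ?g = "gam v"
      have g: "?g \<in> jB B" "?g < N" using vB[OF B True] by blast+
      have yg: "y ?g = v" using gam_in BY[OF B] True by blast
      have vd: "v \<in> dmn \<mu>" using BY[OF B] True by blast
      have "\<forall>m\<in>set_pmf (snd \<mu>). dom m = fst \<mu>" using wf unfolding wf_dist_def by (elim conjE)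
      then have dm: "dom m = dmn \<mu>" using m unfolding dmn_def by simp
      then obtain r where r: "m v = Some r" using vd by blast
      have sv: "\<sigma> v = None" using sd vd by blast
      have "eval \<sigma> m (Var (y ?g)) = r" using yg r sv by simp
      moreover have "eval \<sigma> m (Var (y ?g)) = f ?g (xs ?g m)" using sim g(2) m unfolding xs_def by blast
      ultimately have fr: "f ?g (xs ?g m) = r" by simp
      have "xs ?g (m |` DU D (jB B)) = xs ?g m"
        unfolding xs_def
      proof (rule map_cong[OF refl])
        fix \<alpha> assume "\<alpha> \<in> set [0..<K ?g + 1]"
        then have "\<alpha> < K ?g + 1" by auto
        then have xin: "x ?g \<alpha> \<in> dom \<sigma> \<union> DU D (jB B)" using xDU[OF g(1)] by blast
        show "eval \<sigma> (m |` DU D (jB B)) (Var (x ?g \<alpha>)) = eval \<sigma> m (Var (x ?g \<alpha>))"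
        proof (cases "\<sigma> (x ?g \<alpha>)")
          case None
          then have "x ?g \<alpha> \<in> DU D (jB B)" using xin by auto
          then show ?thesis using None by simp
        next
          case (Some a)
          then show ?thesis by simp
        qed
      qed
      then show ?thesis using True fr r unfolding \<Phi>_def by simp
    qed
  qed
  have J1: "\<forall>j\<in>J. j \<subseteq> {..<N}" unfolding J_def jB_def by blast
  have J2: "\<forall>j\<in>J. \<forall>j'\<in>J. j \<noteq> j' \<longrightarrow> j \<inter> j' = {}"
  proof (intro ballI impI)
    fix j j' assume j: "j \<in> J" "j' \<in> J" "j \<noteq> j'"
    then obtain B B' where BB: "B \<in> T" "B' \<in> T" "j = jB B" "j' = jB B'" unfolding J_def by blast
    then have "B \<noteq> B'" using j by blast
    then have BB': "B \<inter> B' = {}" using Tdisj BB by blast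
    show "j \<inter> j' = {}"
    proof (rule ccontr)
      assume "j \<inter> j' \<noteq> {}"
      then obtain g where "g \<in> jB B" "g \<in> jB B'" using BB by blast
      then have "y g \<in> B \<inter> B'" unfolding jB_def by auto
      then show False using BB' by blast
    qed
  qed
  have J3: "\<forall>j\<in>J. \<forall>m\<in>mems (DU D j). 0 \<le> F j m"
  proof (intro ballI)
    fix j m assume "j \<in> J" "m \<in> mems (DU D j)"
    then obtain B where B: "B \<in> T" "j = jB B" unfolding J_def by blast
    have "0 \<le> fs B (\<Phi> B m)" using nn B(1) PhiMem by blast
    then show "0 \<le> F j m" using FjB[OF B(1)] B(2) by simp
  qed
  have J4: "(\<forall>j\<in>J. mono_mem (DU D j) (F j)) \<or> (\<forall>j\<in>J. anti_mem (DU D j) (F j))"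
  proof -
    have MM: "mono_mem (DU D (jB B)) (F (jB B))" if "B \<in> T" "mono_mem B (fs B)" "\<forall>\<gamma><N. mono_vec (K \<gamma> + 1) (f \<gamma>)" for B
      unfolding mono_mem_def using that PhiM PhiMem FjB unfolding mono_mem_def by metis
    have AA: "mono_mem (DU D (jB B)) (F (jB B))" if "B \<in> T" "anti_mem B (fs B)" "\<forall>\<gamma><N. anti_vec (K \<gamma> + 1) (f \<gamma>)" for B
      unfolding mono_mem_def using that PhiA PhiMem FjB unfolding anti_mem_def by metis
    have MA: "anti_mem (DU D (jB B)) (F (jB B))" if "B \<in> T" "anti_mem B (fs B)" "\<forall>\<gamma><N. mono_vec (K \<gamma> + 1) (f \<gamma>)" for B
      unfolding anti_mem_def using that PhiM PhiMem FjB unfolding anti_mem_def by metis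
    have AM: "anti_mem (DU D (jB B)) (F (jB B))" if "B \<in> T" "mono_mem B (fs B)" "\<forall>\<gamma><N. anti_vec (K \<gamma> + 1) (f \<gamma>)" for B
      unfolding anti_mem_def using that PhiA PhiMem FjB unfolding mono_mem_def by metis
    from mon show ?thesis
    proof
      assume fmono: "\<forall>\<gamma><N. mono_vec (K \<gamma> + 1) (f \<gamma>)"
      from fm show ?thesis
      proof
        assume "\<forall>A\<in>T. mono_mem A (fs A)"
        then have "\<forall>j\<in>J. mono_mem (DU D j) (F j)" unfolding J_def using MM fmono by blast
        then show ?thesis by blast
      next
        assume "\<forall>A\<in>T. anti_mem A (fs A)"
        then have "\<forall>j\<in>J. anti_mem (DU D j) (F j)" unfolding J_def using MA fmono by blast
        then show ?thesis by blast
      qed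
    next
      assume fanti: "\<forall>\<gamma><N. anti_vec (K \<gamma> + 1) (f \<gamma>)"
      from fm show ?thesis
      proof
        assume "\<forall>A\<in>T. mono_mem A (fs A)"
        then have "\<forall>j\<in>J. anti_mem (DU D j) (F j)" unfolding J_def using AM fanti by blast
        then show ?thesis by blast
      next
        assume "\<forall>A\<in>T. anti_mem A (fs A)"
        then have "\<forall>j\<in>J. mono_mem (DU D j) (F j)" unfolding J_def using AA fanti by blast
        then show ?thesis by blast
      qed
    qed
  qed
  have main: "(\<integral>\<^sup>+ m. ennreal (\<Prod>j\<in>J. F j (m |` DU D j)) \<partial>measure_pmf (snd \<mu>))
       \<le> (\<Prod>j\<in>J. \<integral>\<^sup>+ m. ennreal (F j (m |` DU D j)) \<partial>measure_pmf (snd \<mu>))"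
    by (rule INA_D[OF INA J1 J2 J3 J4])
  have fac: "F (jB B) (m |` DU D (jB B)) = fs B (m |` B)" if "B \<in> T" "m \<in> set_pmf (snd \<mu>)" for B m
    using FjB[OF that(1)] key[OF that] by simp
  have e1: "(\<integral>\<^sup>+ m. ennreal (\<Prod>j\<in>J. F j (m |` DU D j)) \<partial>measure_pmf (snd \<mu>))
     = (\<integral>\<^sup>+ m. ennreal (\<Prod>A\<in>T. fs A (m |` A)) \<partial>measure_pmf (snd \<mu>))"
  proof (rule nn_integral_cong_AE, rule AE_pmfI)
    fix m assume m: "m \<in> set_pmf (snd \<mu>)"
    have "(\<Prod>j\<in>J. F j (m |` DU D j)) = (\<Prod>B\<in>T. F (jB B) (m |` DU D (jB B)))"
      unfolding J_def by (simp add: prod.reindex[OF injB])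
    also have "\<dots> = (\<Prod>A\<in>T. fs A (m |` A))" by (rule prod.cong[OF refl]) (rule fac[OF _ m])
    finally show "ennreal (\<Prod>j\<in>J. F j (m |` DU D j)) = ennreal (\<Prod>A\<in>T. fs A (m |` A))" by simp
  qed
  have e2: "(\<Prod>j\<in>J. \<integral>\<^sup>+ m. ennreal (F j (m |` DU D j)) \<partial>measure_pmf (snd \<mu>))
     = (\<Prod>A\<in>T. \<integral>\<^sup>+ m. ennreal (fs A (m |` A)) \<partial>measure_pmf (snd \<mu>))"
  proof -
    have "(\<Prod>j\<in>J. \<integral>\<^sup>+ m. ennreal (F j (m |` DU D j)) \<partial>measure_pmf (snd \<mu>))
       = (\<Prod>B\<in>T. \<integral>\<^sup>+ m. ennreal (F (jB B) (m |` DU D (jB B))) \<partial>measure_pmf (snd \<mu>))"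
      unfolding J_def by (simp add: prod.reindex[OF injB])
    also have "\<dots> = (\<Prod>A\<in>T. \<integral>\<^sup>+ m. ennreal (fs A (m |` A)) \<partial>measure_pmf (snd \<mu>))"
    proof (rule prod.cong[OF refl])
      fix B assume B: "B \<in> T"
      show "(\<integral>\<^sup>+ m. ennreal (F (jB B) (m |` DU D (jB B))) \<partial>measure_pmf (snd \<mu>))
          = (\<integral>\<^sup>+ m. ennreal (fs B (m |` B)) \<partial>measure_pmf (snd \<mu>))"
        by (rule nn_integral_cong_AE, rule AE_pmfI) (simp add: fac[OF B])
    qed
    finally show ?thesis .
  qed
  show ?thesis using main unfolding e1 e2 .
qed

lemma dmn_marg[simp]: "dmn (marg A \<mu>) = A" by (simp add: marg_def dmn_def)

lemma support_dom:
  assumes "wf_dist \<mu>" "m \<in> set_pmf (snd \<mu>)" shows "dom m = dmn \<mu>"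
proof -
  have "\<forall>m\<in>set_pmf (snd \<mu>). dom m = fst \<mu>" using assms(1) unfolding wf_dist_def by (elim conjE)
  then show ?thesis using assms(2) unfolding dmn_def by simp
qed

lemma restrict_dom_self: "m |` dom m = m"
  by (rule ext) (auto simp: restrict_map_def dom_def)

lemma wf_marg:
  assumes "wf_dist \<mu>" "A \<subseteq> dmn \<mu>" shows "wf_dist (marg A \<mu>)"
proof -
  have fin: "finite (fst \<mu>)" using assms(1) unfolding wf_dist_def by (elim conjE)
  have "finite A" using finite_subset[OF assms(2)] fin unfolding dmn_def by simp
  moreover have "\<forall>m\<in>set_pmf (snd (marg A \<mu>)). dom m = A"
  proof
    fix m assume "m \<in> set_pmf (snd (marg A \<mu>))"
    then obtain m0 where m0: "m0 \<in> set_pmf (snd \<mu>)" "m = m0 |` A" unfolding marg_def by auto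
    have "dom m0 = dmn \<mu>" by (rule support_dom[OF assms(1) m0(1)])
    then show "dom m = A" using m0(2) assms(2) by auto
  qed
  ultimately show ?thesis unfolding wf_dist_def marg_def by simp
qed

lemma marg_marg: "A \<subseteq> B \<Longrightarrow> marg A (marg B \<mu>) = marg A \<mu>"
  by (simp add: marg_def map_pmf_comp Int_absorb1 Int_absorb2)

lemma marg_self:
  assumes "wf_dist \<mu>" shows "marg (dmn \<mu>) \<mu> = \<mu>"
proof -
  have "map_pmf (\<lambda>m. m |` dmn \<mu>) (snd \<mu>) = snd \<mu>"
  proof (rule map_pmf_idI)
    fix m assume "m \<in> set_pmf (snd \<mu>)"
    then have "dom m = dmn \<mu>" by (rule support_dom[OF assms])
    then show "m |` dmn \<mu> = m" using restrict_dom_self[of m] by simp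
  qed
  then show ?thesis unfolding marg_def dmn_def by (cases \<mu>) simp
qed

lemma dist_le_marg: "A \<subseteq> dmn \<mu> \<Longrightarrow> dist_le (marg A \<mu>) \<mu>"
  unfolding dist_le_def by simp

lemma dist_le_refl: "wf_dist \<mu> \<Longrightarrow> dist_le \<mu> \<mu>"
  unfolding dist_le_def using marg_self by blast

theorem mainTheorem13:
  fixes DV RV :: "'v set" and \<sigma> :: "'v mem" and \<mu> :: "'v dist"
    and N :: nat and K :: "nat \<Rightarrow> nat" and x :: "nat \<Rightarrow> nat \<Rightarrow> 'v" and y :: "nat \<Rightarrow> 'v"
    and f :: "nat \<Rightarrow> real list \<Rightarrow> real"
  assumes "DV \<inter> RV = {}"
    and "is_state DV RV \<sigma> \<mu>"
    and "0 < N"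
    and "inj_on y {..<N}"
    and "(\<forall>\<gamma><N. mono_vec (K \<gamma> + 1) (f \<gamma>)) \<or> (\<forall>\<gamma><N. anti_vec (K \<gamma> + 1) (f \<gamma>))"
    and "sat \<sigma> \<mu> (bigsep N (\<lambda>\<gamma>. bigconj (K \<gamma> + 1) (\<lambda>\<alpha>. Bnd (x \<gamma> \<alpha>))))"
    and "\<forall>\<gamma><N. sat \<sigma> \<mu> (Sim (Var (y \<gamma>)) (Fun (f \<gamma>) (map (\<lambda>\<alpha>. Var (x \<gamma> \<alpha>)) [0..<K \<gamma> + 1])))"
  shows "sat \<sigma> \<mu> (bigsep N (\<lambda>\<gamma>. Bnd (y \<gamma>)))"
proof -
  have st: "wf_dist \<mu>" using assms(2) unfolding is_state_def by (elim conjE)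
  have sd: "dom \<sigma> \<inter> dmn \<mu> = {}" using assms(1,2) unfolding is_state_def by blast
  obtain n where N: "N = Suc n" using assms(3) by (cases N) auto
  have s6: "sat \<sigma> \<mu> (bigsep (Suc n) (\<lambda>\<gamma>. bigconj (K \<gamma> + 1) (\<lambda>\<alpha>. Bnd (x \<gamma> \<alpha>))))"
    using assms(6) unfolding N .
  obtain D where Dx0: "\<forall>\<gamma><Suc n. \<forall>\<alpha><K \<gamma> + 1. x \<gamma> \<alpha> \<in> dom \<sigma> \<union> D \<gamma>" and DI0: "INA (snd \<mu>) D {..<Suc n}"
    using X_lemma[OF st s6] by blast
  have Dx: "\<forall>\<gamma><N. \<forall>\<alpha><K \<gamma> + 1. x \<gamma> \<alpha> \<in> dom \<sigma> \<union> D \<gamma>" using Dx0 unfolding N .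
  have DI: "INA (snd \<mu>) D {..<N}" using DI0 unfolding N .
  have simA: "\<forall>\<gamma><N. \<forall>m\<in>set_pmf (snd \<mu>). eval \<sigma> m (Var (y \<gamma>)) = f \<gamma> (map (\<lambda>\<alpha>. eval \<sigma> m (Var (x \<gamma> \<alpha>))) [0..<K \<gamma> + 1])"
  proof (intro allI impI ballI)
    fix g m assume g: "g < N" and m: "m \<in> set_pmf (snd \<mu>)"
    have "sat \<sigma> \<mu> (Sim (Var (y g)) (Fun (f g) (map (\<lambda>\<alpha>. Var (x g \<alpha>)) [0..<K g + 1])))"
      using assms(7) g by blast
    then have "eval \<sigma> m (Var (y g)) = eval \<sigma> m (Fun (f g) (map (\<lambda>\<alpha>. Var (x g \<alpha>)) [0..<K g + 1]))"
      using m by simp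
    then show "eval \<sigma> m (Var (y g)) = f g (map (\<lambda>\<alpha>. eval \<sigma> m (Var (x g \<alpha>))) [0..<K g + 1])"
      by (simp add: comp_def)
  qed
  have ydom: "y g \<in> dom \<sigma> \<union> dmn \<mu>" if "g < N" for g
  proof -
    have "sat \<sigma> \<mu> (Sim (Var (y g)) (Fun (f g) (map (\<lambda>\<alpha>. Var (x g \<alpha>)) [0..<K g + 1])))"
      using assms(7) that by blast
    then show ?thesis by simp
  qed
  define Y where "Y k = y ` {..<k} \<inter> dmn \<mu>" for k
  have Ysub: "Y k \<subseteq> dmn \<mu>" for k unfolding Y_def by blast
  have YN: "Y k \<subseteq> Y N" if "k \<le> N" for k unfolding Y_def using that by auto
  have PNAY: "PNA (marg A0 \<mu>) P" if A0: "A0 \<subseteq> Y N" and PA: "\<Union>P \<subseteq> A0" for A0 P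
    unfolding PNA_def
  proof (intro allI impI)
    fix T :: "'v set set" and fs :: "'v set \<Rightarrow> 'v mem \<Rightarrow> real"
    assume H: "coarsens T P \<and> (\<forall>A\<in>T. \<forall>m\<in>mems A. 0 \<le> fs A m) \<and>
       ((\<forall>A\<in>T. mono_mem A (fs A)) \<or> (\<forall>A\<in>T. anti_mem A (fs A)))"
    have C: "coarsens T P" using H by (elim conjE)
    have nn: "\<forall>A\<in>T. \<forall>m\<in>mems A. 0 \<le> fs A m" using H by (elim conjE)
    have fm: "(\<forall>A\<in>T. mono_mem A (fs A)) \<or> (\<forall>A\<in>T. anti_mem A (fs A))" using H by (elim conjE)
    have CU: "\<Union>T = \<Union>P" and Tp: "is_partition T" using C unfolding coarsens_def by blast+
    have TA: "B \<subseteq> A0" if "B \<in> T" for B using that CU PA by blast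
    have Tsub: "\<Union>T \<subseteq> y ` {..<N} \<inter> dmn \<mu>" using CU PA A0 unfolding Y_def by blast
    have e1: "(\<integral>\<^sup>+ m. ennreal (\<Prod>A\<in>T. fs A (m |` A)) \<partial>measure_pmf (snd (marg A0 \<mu>)))
       = (\<integral>\<^sup>+ m. ennreal (\<Prod>A\<in>T. fs A (m |` A)) \<partial>measure_pmf (snd \<mu>))"
      by (rule marg_integral) (intro arg_cong[where f=ennreal] prod.cong refl, simp add: TA Int_absorb1)
    have e2: "(\<Prod>A\<in>T. \<integral>\<^sup>+ m. ennreal (fs A (m |` A)) \<partial>measure_pmf (snd (marg A0 \<mu>)))
       = (\<Prod>A\<in>T. \<integral>\<^sup>+ m. ennreal (fs A (m |` A)) \<partial>measure_pmf (snd \<mu>))"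
      by (intro prod.cong refl marg_integral) (simp add: TA Int_absorb1)
    show "(\<integral>\<^sup>+ m. ennreal (\<Prod>A\<in>T. fs A (m |` A)) \<partial>measure_pmf (snd (marg A0 \<mu>)))
         \<le> (\<Prod>A\<in>T. \<integral>\<^sup>+ m. ennreal (fs A (m |` A)) \<partial>measure_pmf (snd (marg A0 \<mu>)))"
      unfolding e1 e2 by (rule YNA[OF sd st assms(4) assms(5) Dx DI simA Tp Tsub nn fm])
  qed
  have Yind: "\<And>\<nu>. wf_dist \<nu> \<Longrightarrow> dist_le (marg (Y (Suc k)) \<mu>) \<nu> \<Longrightarrow> Suc k \<le> N \<Longrightarrow>
      sat \<sigma> \<nu> (bigsep (Suc k) (\<lambda>\<gamma>. Bnd (y \<gamma>)))" for k
  proof (induction k)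
    case 0
    have d: "Y (Suc 0) \<subseteq> dmn \<nu>" using 0(2) unfolding dist_le_def by simp
    have "y 0 \<in> dom \<sigma> \<union> dmn \<mu>" using ydom assms(3) by blast
    then have "y 0 \<in> dom \<sigma> \<union> Y (Suc 0)" unfolding Y_def by auto
    then show ?case using d by auto
  next
    case (Suc k)
    define \<mu>' where "\<mu>' = marg (Y (Suc (Suc k))) \<mu>"
    define \<mu>1 where "\<mu>1 = marg (Y (Suc k)) \<mu>"
    define \<mu>2 where "\<mu>2 = marg ({y (Suc k)} \<inter> dmn \<mu>) \<mu>"
    have kN: "Suc k < N" using Suc.prems(3) by simp
    have w': "wf_dist \<mu>'" unfolding \<mu>'_def by (rule wf_marg[OF st Ysub])
    have w1: "wf_dist \<mu>1" unfolding \<mu>1_def by (rule wf_marg[OF st Ysub])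
    have w2: "wf_dist \<mu>2" unfolding \<mu>2_def by (rule wf_marg[OF st]) blast
    have d1: "dmn \<mu>1 = Y (Suc k)" unfolding \<mu>1_def by simp
    have d2: "dmn \<mu>2 = {y (Suc k)} \<inter> dmn \<mu>" unfolding \<mu>2_def by simp
    have d': "dmn \<mu>' = Y (Suc (Suc k))" unfolding \<mu>'_def by simp
    have Yss: "Y (Suc (Suc k)) = Y (Suc k) \<union> ({y (Suc k)} \<inter> dmn \<mu>)" unfolding Y_def
      by (auto simp: lessThan_Suc)
    have ynot: "y (Suc k) \<notin> y ` {..<Suc k}"
    proof
      assume "y (Suc k) \<in> y ` {..<Suc k}"
      then obtain g where g: "g < Suc k" "y (Suc k) = y g" by auto
      have "Suc k = g" using inj_onD[OF assms(4) g(2)] kN g(1) by simp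
      then show False using g(1) by simp
    qed
    have yY: "y (Suc k) \<notin> Y (Suc k)" using ynot unfolding Y_def by blast
    have disj12: "dmn \<mu>1 \<inter> dmn \<mu>2 = {}" unfolding d1 d2 using yY by blast
    have m1': "marg (Y (Suc k)) \<mu>' = \<mu>1" unfolding \<mu>'_def \<mu>1_def by (rule marg_marg) (simp add: Yss)
    have m2': "marg ({y (Suc k)} \<inter> dmn \<mu>) \<mu>' = \<mu>2" unfolding \<mu>'_def \<mu>2_def by (rule marg_marg) (simp add: Yss)
    have m1: "marg (dmn \<mu>1) \<mu>' = \<mu>1" using m1' d1 by simp
    have m2: "marg (dmn \<mu>2) \<mu>' = \<mu>2" using m2' d2 by simp
    have YSN: "Y (Suc (Suc k)) \<subseteq> Y N" using YN Suc.prems(3) by blast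
    have pn: "\<forall>S T. is_partition S \<and> \<Union>S \<subseteq> dmn \<mu>1 \<and> is_partition T \<and> \<Union>T \<subseteq> dmn \<mu>2 \<and>
                     PNA \<mu>1 S \<and> PNA \<mu>2 T \<longrightarrow> PNA \<mu>' (S \<union> T)"
    proof (intro allI impI)
      fix S T :: "'v set set"
      assume H: "is_partition S \<and> \<Union>S \<subseteq> dmn \<mu>1 \<and> is_partition T \<and> \<Union>T \<subseteq> dmn \<mu>2 \<and>
                     PNA \<mu>1 S \<and> PNA \<mu>2 T"
      have u1: "\<Union>S \<subseteq> dmn \<mu>1" and u2: "\<Union>T \<subseteq> dmn \<mu>2" using H by blast+
      have "\<Union>(S \<union> T) \<subseteq> Y (Suc (Suc k))" using u1 u2 unfolding d1 d2 Yss by blast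
      then show "PNA \<mu>' (S \<union> T)" unfolding \<mu>'_def by (rule PNAY[OF YSN])
    qed
    have eq: "oplus \<mu>1 \<mu>2 = {\<mu>. wf_dist \<mu> \<and> dmn \<mu> = dmn \<mu>1 \<union> dmn \<mu>2 \<and>
              marg (dmn \<mu>1) \<mu> = \<mu>1 \<and> marg (dmn \<mu>2) \<mu> = \<mu>2 \<and>
              (\<forall>S T. is_partition S \<and> \<Union>S \<subseteq> dmn \<mu>1 \<and> is_partition T \<and> \<Union>T \<subseteq> dmn \<mu>2 \<and>
                     PNA \<mu>1 S \<and> PNA \<mu>2 T \<longrightarrow> PNA \<mu> (S \<union> T))}"
      unfolding oplus_def using disj12 by simp
    have dU: "dmn \<mu>' = dmn \<mu>1 \<union> dmn \<mu>2" unfolding d' d1 d2 Yss ..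
    have op: "\<mu>' \<in> oplus \<mu>1 \<mu>2" unfolding eq
      by (intro CollectI conjI w' dU m1 m2 pn)
    have s1: "sat \<sigma> \<mu>1 (bigsep (Suc k) (\<lambda>\<gamma>. Bnd (y \<gamma>)))"
      by (rule Suc.IH[OF w1]) (simp_all add: \<mu>1_def[symmetric] dist_le_refl[OF w1] less_imp_le[OF kN])
    have "y (Suc k) \<in> dom \<sigma> \<union> dmn \<mu>" using ydom kN by blast
    then have "y (Suc k) \<in> dom \<sigma> \<union> dmn \<mu>2" unfolding d2 by blast
    then have s2: "sat \<sigma> \<mu>2 (Bnd (y (Suc k)))" by simp
    have le: "dist_le \<mu>' \<nu>" unfolding \<mu>'_def by (rule Suc.prems(2))
    show ?case
      using w' w1 w2 le op s1 s2 by (simp only: bigsep.simps sat.simps) blast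
  qed
  have "sat \<sigma> \<mu> (bigsep (Suc n) (\<lambda>\<gamma>. Bnd (y \<gamma>)))"
    by (rule Yind[OF st dist_le_marg[OF Ysub]]) (simp add: N)
  then show ?thesis unfolding N .
qed

end
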